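(* Let $\mathbf{f}=\{f_1,\dots,f_m\}$ be a simple problem and $\mathbf{g}\subseteq\mathbf{f}$ a subproblem. Then for each $i\in\{1,\dots,m\}$, the restriction of the projection $\pi_{-i}:\mathbb{R}^m\to\mathbb{R}^m$, $(y_1,\dots,y_m)\mapsto(y_1,\dots,y_{i-1},0,y_{i+1},\dots,y_m)$, to $\operatorname{Int}\mathbf{f}X^*(\mathbf{g})$ is a topological embedding.
   Context: A problem is a finite set $\mathbf{f}=\{f_1,\dots,f_m\}$ of functions $f_i:\mathbb{R}^n\to\mathbb{R}$ together with a feasible region $X\subseteq\mathbb{R}^n$, to be minimized simultaneously; its evaluation map is $x\mapsto(f_1(x),\dots,f_m(x))$. A subproblem $\mathbf{g}\subseteq\mathbf{f}$ is a subset of these functions (including $\emptyset$ and $\mathbf{f}$), with the same $X$; its evaluation map is $x\mapsto(f_i(x))_{f_i\in\mathbf{g}}\in\mathbb{R}^{|\mathbf{g}|}$. The Pareto set $X^*(\mathbf{g})$ is the set of $x^*\in X$ for which there is no $x\in X$ with $f_i(x)\le f_i(x^* )$ for all $f_i\in\mathbf{g}$ and $f_j(x)<f_j(x^* )$ for some $f_j\in\mathbf{g}$; by convention $X^*(\emptyset)=\emptyset$. $\mathbf{f}X^*(\mathbf{g})$ denotes the image of $X^*(\mathbf{g})$ under the evaluation map of $\mathbf{f}$. A problem $\mathbf{f}$ is simple if every subproblem $\mathbf{g}\subseteq\mathbf{f}$ with $k=|\mathbf{g}|$ objectives satisfies: (S1) $X^*(\mathbf{g})$ is homeomorphic to $\Delta^{k-1}=\{t\in[0,1]^k:\sum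 t_i=1\}$ (with $\Delta^{-1}=\emptyset$); (S2) the evaluation map of $\mathbf{g}$ restricted to $X^*(\mathbf{g})$ is a topological embedding into $\mathbb{R}^k$. For a simple problem, each $\mathbf{f}X^*(\mathbf{g})$ is homeomorphic to $\Delta^{|\mathbf{g}|-1}$, hence a topological manifold with boundary; $\operatorname{Int}$ and $\partial$ denote its manifold interior and manifold boundary (for a single point, the interior is the point and the boundary is empty). All sets carry the subspace topology from Euclidean space. *)

theory Defs
  imports "HOL-Analysis.Analysis"
begin

text \<open>A problem: objectives indexed by a finite type 'm (so m = CARD('m)),
  each f i : R^n -> R, with feasible region X.  A subproblem is a set g of indices.\<close>

definition pareto_set ::
  "(real^'n) set \<Rightarrow> ('m::finite \<Rightarrow> real^'n \<Rightarrow> real) \<Rightarrow> 'm set \<Rightarrow> (real^'n) set" where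
  "pareto_set X f g =
     (if g = {} then {} else
      {xs \<in> X. \<not> (\<exists>x\<in>X. (\<forall>i\<in>g. f i x \<le> f i xs) \<and> (\<exists>j\<in>g. f j x < f j xs))})"

definition eval_map :: "('m::finite \<Rightarrow> real^'n \<Rightarrow> real) \<Rightarrow> real^'n \<Rightarrow> real^'m" where
  "eval_map f x = (\<chi> i. f i x)"

text \<open>Evaluation map of the subproblem g, into the coordinate copy of R^|g| inside R^m
  (coordinates outside g are set to 0).\<close>
definition sub_eval_map :: "('m::finite \<Rightarrow> real^'n \<Rightarrow> real) \<Rightarrow> 'm set \<Rightarrow> real^'n \<Rightarrow> real^'m" where
  "sub_eval_map f g x = (\<chi> i. if i \<in> g then f i x else 0)"

text \<open>The standard simplex Delta^{|g|-1}, realised on the coordinates g (empty if g is empty).\<close>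
definition std_simplex :: "'m::finite set \<Rightarrow> (real^'m) set" where
  "std_simplex g = {t. (\<forall>j. j \<notin> g \<longrightarrow> t $ j = 0) \<and> (\<forall>j\<in>g. 0 \<le> t $ j) \<and> (\<Sum>j\<in>g. t $ j) = 1}"

definition topological_embedding :: "'a::topological_space set \<Rightarrow> ('a \<Rightarrow> 'b::topological_space) \<Rightarrow> bool" where
  "topological_embedding A h \<longleftrightarrow> (\<exists>k. homeomorphism A (h ` A) h k)"

definition simple_problem :: "(real^'n) set \<Rightarrow> ('m::finite \<Rightarrow> real^'n \<Rightarrow> real) \<Rightarrow> bool" where
  "simple_problem X f \<longleftrightarrow>
     (\<forall>g. pareto_set X f g homeomorphic std_simplex g \<and>
          topological_embedding (pareto_set X f g) (sub_eval_map f g))"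

text \<open>Manifold interior of a d-dimensional topological manifold with boundary S:
  points having a neighbourhood (open in S) homeomorphic to an open subset of R^d,
  where R^d is realised as a d-dimensional linear subspace of R^m.\<close>
definition manifold_interior :: "nat \<Rightarrow> (real^'m::finite) set \<Rightarrow> (real^'m) set" where
  "manifold_interior d S = {x \<in> S. \<exists>U (T::(real^'m) set) V. openin (top_of_set S) U \<and> x \<in> U \<and>
       subspace T \<and> dim T = d \<and> openin (top_of_set T) V \<and> U homeomorphic V}"

definition proj_minus :: "'m::finite \<Rightarrow> real^'m \<Rightarrow> real^'m" where
  "proj_minus i y = (\<chi> j. if j = i then 0 else y $ j)"

end

theory Submission
  imports Defs
begin

lemma open_map_lemma:
  fixes \<psi> :: "real^'m::finite \<Rightarrow> real^'m" and M :: "(real^'m) set"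
  assumes cont: "continuous_on M \<psi>" and inj: "inj_on \<psi> M"
    and subV: "subspace V" and dimV: "dim V \<le> d" and im: "\<psi> ` M \<subseteq> V"
    and loc: "\<And>y. y \<in> M \<Longrightarrow> \<exists>U (T::(real^'m) set) V0. openin (top_of_set M) U \<and> y \<in> U \<and>
       subspace T \<and> dim T = d \<and> openin (top_of_set T) V0 \<and> U homeomorphic V0"
    and W: "openin (top_of_set M) W"
  shows "openin (top_of_set (\<psi> ` M)) (\<psi> ` W)"
proof -
  have "\<forall>z\<in>\<psi> ` W. \<exists>Z. openin (top_of_set (\<psi> ` M)) Z \<and> z \<in> Z \<and> Z \<subseteq> \<psi> ` W"
  proof
    fix z assume "z \<in> \<psi> ` W"
    then obtain y where y: "y \<in> W" "z = \<psi> y" by auto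
    have yM: "y \<in> M" using W y openin_imp_subset by blast
    obtain U and T :: "(real^'m) set" and V0 where U: "openin (top_of_set M) U" "y \<in> U" "subspace T" "dim T = d"
      "openin (top_of_set T) V0" "U homeomorphic V0" using loc[OF yM] by metis
    obtain h h' where hh: "homeomorphism U V0 h h'" using U(6) homeomorphic_def by blast
    have hh1: "\<And>x. x \<in> U \<Longrightarrow> h' (h x) = x" using hh by (simp add: homeomorphism_def)
    have hh2: "\<And>x. x \<in> V0 \<Longrightarrow> h (h' x) = x" using hh by (simp add: homeomorphism_def)
    have hU: "h ` U = V0" using hh by (simp add: homeomorphism_def)
    have conth': "continuous_on V0 h'" using hh by (simp add: homeomorphism_def)
    have UM: "U \<subseteq> M" using U(1) openin_imp_subset by blast
    have WUo: "openin (top_of_set M) (W \<inter> U)" using W U(1) by (rule openin_Int)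
    have WU: "openin (top_of_set U) (W \<inter> U)"
      using openin_subset_trans[OF WUo _ UM] by blast
    have o1: "openin (top_of_set V0) (h ` (W \<inter> U))"
      using homeomorphism_imp_open_map[OF hh WU] .
    have o2: "openin (top_of_set T) (h ` (W \<inter> U))"
      using openin_trans[OF o1 U(5)] .
    have sub1: "h ` (W \<inter> U) \<subseteq> V0" using hU by blast
    have hback: "h' ` h ` (W \<inter> U) = W \<inter> U"
      unfolding image_image by (rule image_cong_simp[THEN trans, OF refl]) (auto simp: hh1)
    have eq: "(\<psi> \<circ> h') ` (h ` (W \<inter> U)) = \<psi> ` (W \<inter> U)"
      by (simp only: image_comp[symmetric] hback)
    have contc: "continuous_on (h ` (W \<inter> U)) (\<psi> \<circ> h')"
    proof (rule continuous_on_compose)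
      show "continuous_on (h ` (W \<inter> U)) h'"
        using conth' sub1 by (rule continuous_on_subset)
      have "W \<inter> U \<subseteq> M" using UM by blast
      then show "continuous_on (h' ` h ` (W \<inter> U)) \<psi>"
        unfolding hback using cont by (rule continuous_on_subset[rotated])
    qed
    have injc: "inj_on (\<psi> \<circ> h') (h ` (W \<inter> U))"
    proof (rule comp_inj_on)
      have "inj_on h' V0" using hh2 by (rule inj_on_inverseI)
      then show "inj_on h' (h ` (W \<inter> U))" using sub1 by (rule inj_on_subset)
      have "W \<inter> U \<subseteq> M" using UM by blast
      then show "inj_on \<psi> (h' ` h ` (W \<inter> U))"
        unfolding hback using inj by (rule inj_on_subset[rotated])
    qed
    have "openin (top_of_set V) ((\<psi> \<circ> h') ` (h ` (W \<inter> U)))"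
    proof (rule invariance_of_domain_subspaces[OF o2 U(3) subV])
      show "dim V \<le> dim T" using dimV U(4) by simp
      show "continuous_on (h ` (W \<inter> U)) (\<psi> \<circ> h')" by (rule contc)
      show "\<psi> \<circ> h' \<in> h ` (W \<inter> U) \<rightarrow> V" using im UM hh1 by (fastforce simp: Pi_iff)
      show "inj_on (\<psi> \<circ> h') (h ` (W \<inter> U))" by (rule injc)
    qed
    then have oV: "openin (top_of_set V) (\<psi> ` (W \<inter> U))" using eq by simp
    have "openin (top_of_set (\<psi> ` M)) (\<psi> ` (W \<inter> U))"
    proof (rule openin_subset_trans[OF oV])
      show "\<psi> ` (W \<inter> U) \<subseteq> \<psi> ` M" using UM by blast
      show "\<psi> ` M \<subseteq> V" by (rule im)
    qed
    moreover have "z \<in> \<psi> ` (W \<inter> U)" using y U(2) by auto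
    ultimately show "\<exists>Z. openin (top_of_set (\<psi> ` M)) Z \<and> z \<in> Z \<and> Z \<subseteq> \<psi> ` W" by blast
  qed
  then show ?thesis using openin_subopen by blast
qed

lemma psi_sum: fixes y :: "real^'m::finite"
  shows "(\<chi> j. if j \<in> G then y $ j else 0) = (\<Sum>j\<in>G. (y $ j) *\<^sub>R axis j (1::real))"
proof -
  have "(\<Sum>j\<in>G. (y $ j) *\<^sub>R axis j (1::real)) $ k = (if k \<in> G then y $ k else 0)" for k
  proof -
    have "(\<Sum>j\<in>G. (y $ j) *\<^sub>R axis j (1::real)) $ k = (\<Sum>j\<in>G. if j = k then y $ k else 0)"
      unfolding sum_component by (rule sum.cong) (auto simp: axis_def)
    also have "\<dots> = (if k \<in> G then y $ k else 0)" using finite[of G] by (simp add: sum.delta')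
    finally show ?thesis .
  qed
  then show ?thesis by (simp add: vec_eq_iff)
qed
lemma lin: "linear (\<lambda>y::real^'m::finite. \<chi> j. if j \<in> G then y $ j else 0)"
  by (rule linearI) (auto simp: vec_eq_iff)
lemma proj_cont: "continuous_on M (proj_minus i)" unfolding proj_minus_def
  by (intro linear_continuous_on linear_conv_bounded_linear[THEN iffD1] linearI) (auto simp: vec_eq_iff)

theorem corollary1:
  fixes X :: "(real^'n) set" and f :: "'m::finite \<Rightarrow> real^'n \<Rightarrow> real"
    and g :: "'m set" and i :: 'm
  assumes "simple_problem X f"
  shows "topological_embedding
           (manifold_interior (card g - 1) (eval_map f ` pareto_set X f g))
           (proj_minus i)"
proof -
  define P where "P = pareto_set X f g"
  define S where "S = eval_map f ` P"
  define d where "d = card g - 1"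
  define M where "M = manifold_interior d S"
  have MS: "M \<subseteq> S" unfolding M_def manifold_interior_def by auto
  obtain kg where hkg: "homeomorphism P (sub_eval_map f g ` P) (sub_eval_map f g) kg"
    using assms unfolding simple_problem_def topological_embedding_def P_def by blast
  have injg: "inj_on (sub_eval_map f g) P"
    by (rule inj_on_inverseI) (rule homeomorphism_apply1[OF hkg])
  show ?thesis
  proof (cases "g = {}")
    case True
    then have "M = {}" using MS unfolding S_def P_def pareto_set_def by auto
    moreover have "homeomorphism {} {} (proj_minus i) id" by (simp add: homeomorphism_def)
    ultimately show ?thesis unfolding topological_embedding_def M_def S_def P_def d_def
      by auto
  next
    case False
    define j0 where "j0 = (if i \<in> g then i else (SOME j. j \<in> g))"
    have j0g: "j0 \<in> g" using False unfolding j0_def by (auto intro: someI_ex)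
    define G where "G = g - {j0}"
    have iG: "i \<notin> G" unfolding G_def j0_def by auto
    define \<psi> :: "real^'m \<Rightarrow> real^'m" where "\<psi> = (\<lambda>y. \<chi> j. if j \<in> G then y $ j else 0)"
    have contpsi: "continuous_on A \<psi>" for A unfolding \<psi>_def
      by (rule linear_continuous_on[OF linear_conv_bounded_linear[THEN iffD1, OF lin]])
    have psiproj: "\<psi> (proj_minus i y) = \<psi> y" for y
      using iG unfolding \<psi>_def proj_minus_def by (auto simp: vec_eq_iff)
    have injS: "inj_on \<psi> S"
    proof (rule inj_onI)
      fix y y' assume "y \<in> S" "y' \<in> S" and eq: "\<psi> y = \<psi> y'"
      then obtain x x' where x: "x \<in> P" "y = eval_map f x" and x': "x' \<in> P" "y' = eval_map f x'"
        unfolding S_def by auto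
      have eqG: "f j x = f j x'" if "j \<in> G" for j
      proof -
        have "\<psi> y $ j = \<psi> y' $ j" using eq by simp
        then show ?thesis using that x x' unfolding \<psi>_def eval_map_def by simp
      qed
      have Pd: "\<not> (\<exists>z\<in>X. (\<forall>k\<in>g. f k z \<le> f k w) \<and> (\<exists>l\<in>g. f l z < f l w))" if "w \<in> P" for w
        using that False unfolding P_def pareto_set_def by auto
      have PX: "w \<in> X" if "w \<in> P" for w using that False unfolding P_def pareto_set_def by auto
      have "f j0 x = f j0 x'"
      proof (rule ccontr)
        assume ne: "f j0 x \<noteq> f j0 x'"
        show False
        proof (cases "f j0 x < f j0 x'")
          case True
          have "\<forall>k\<in>g. f k x \<le> f k x'" using eqG True unfolding G_def by force
          then show False using Pd[OF x'(1)] PX[OF x(1)] True j0g by blast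
        next
          case False
          then have lt: "f j0 x' < f j0 x" using ne by simp
          have "\<forall>k\<in>g. f k x' \<le> f k x" using eqG lt unfolding G_def by force
          then show False using Pd[OF x(1)] PX[OF x'(1)] lt j0g by blast
        qed
      qed
      then have "sub_eval_map f g x = sub_eval_map f g x'"
        using eqG unfolding sub_eval_map_def G_def by (auto simp: vec_eq_iff)
      then have "x = x'" using injg x x' inj_onD by metis
      then show "y = y'" using x x' by simp
    qed
    define V where "V = span ((\<lambda>j. axis j (1::real)) ` G)"
    have subV: "subspace V" unfolding V_def by simp
    have dimV: "dim V \<le> d"
    proof -
      have "dim V \<le> card ((\<lambda>j. axis j (1::real)) ` G)"
        unfolding V_def by (rule dim_le_card) auto
      also have "\<dots> \<le> card G" by (rule card_image_le) simp
      also have "\<dots> = d" unfolding G_def d_def using j0g by simp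
      finally show ?thesis .
    qed
    have psiV: "\<psi> y \<in> V" for y
    proof -
      have "\<psi> y = (\<Sum>j\<in>G. (y $ j) *\<^sub>R axis j 1)"
        unfolding \<psi>_def by (rule psi_sum)
      also have "\<dots> \<in> V" unfolding V_def
        by (intro span_sum span_mul span_base) auto
      finally show ?thesis .
    qed
    have loc: "\<exists>U (T::(real^'m) set) V0. openin (top_of_set M) U \<and> y \<in> U \<and>
       subspace T \<and> dim T = d \<and> openin (top_of_set T) V0 \<and> U homeomorphic V0" if yM: "y \<in> M" for y
    proof -
      obtain U and T :: "(real^'m) set" and V0 where U: "openin (top_of_set S) U" "y \<in> U"
        "subspace T" "dim T = d" "openin (top_of_set T) V0" "U homeomorphic V0"
      proof -
        have "y \<in> manifold_interior d S" using yM by (simp only: M_def)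
        then have "\<exists>U (T::(real^'m) set) V0. openin (top_of_set S) U \<and> y \<in> U \<and>
          subspace T \<and> dim T = d \<and> openin (top_of_set T) V0 \<and> U homeomorphic V0"
          unfolding manifold_interior_def mem_Collect_eq by (rule conjunct2)
        then show ?thesis using that by (elim exE conjE) blast
      qed
      have US: "U \<subseteq> S" using U(1) by (rule openin_imp_subset)
      have "U \<subseteq> M"
      proof
        fix z assume "z \<in> U"
        then have zS: "z \<in> S" using US by blast
        show "z \<in> M" unfolding M_def manifold_interior_def mem_Collect_eq
        proof (rule conjI[OF zS])
          show "\<exists>U' (T'::(real^'m) set) V'. openin (top_of_set S) U' \<and> z \<in> U' \<and>
             subspace T' \<and> dim T' = d \<and> openin (top_of_set T') V' \<and> U' homeomorphic V'"
            by (rule exI[of _ U], rule exI[of _ T], rule exI[of _ V0]) (intro conjI; fact)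
        qed
      qed
      then have UMo: "openin (top_of_set M) U" by (rule openin_subset_trans[OF U(1) _ MS])
      show ?thesis
        by (rule exI[of _ U], rule exI[of _ T], rule exI[of _ V0]) (intro conjI; fact)
    qed
    have injM: "inj_on \<psi> M" using injS MS by (rule inj_on_subset)
    obtain \<psi>i where hpsi: "homeomorphism M (\<psi> ` M) \<psi> \<psi>i"
    proof (rule homeomorphism_injective_open_map[OF contpsi refl injM])
      fix W assume "openin (top_of_set M) W"
      have im: "\<psi> ` M \<subseteq> V" using psiV by blast
      show "openin (top_of_set (\<psi> ` M)) (\<psi> ` W)"
        by (rule open_map_lemma[OF contpsi injM subV dimV im], rule loc, assumption, fact)
    qed
    have injP: "inj_on (proj_minus i) M"
    proof (rule inj_onI)
      fix a b assume "a \<in> M" "b \<in> M" "proj_minus i a = proj_minus i b"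
      then have "\<psi> a = \<psi> b" using psiproj by metis
      then show "a = b" using \<open>a \<in> M\<close> \<open>b \<in> M\<close> by (rule inj_onD[OF injM])
    qed
    have hp1: "\<And>x. x \<in> M \<Longrightarrow> \<psi>i (\<psi> x) = x" using hpsi by (rule homeomorphism_apply1)
    have "homeomorphism M (proj_minus i ` M) (proj_minus i) (\<lambda>z. \<psi>i (\<psi> z))"
    proof (rule homeomorphismI)
      show "continuous_on M (proj_minus i)" by (rule proj_cont)
      show "proj_minus i ` M \<subseteq> proj_minus i ` M" by simp
      show "continuous_on (proj_minus i ` M) (\<lambda>z. \<psi>i (\<psi> z))"
      proof (rule continuous_on_compose2[of "\<psi> ` M" \<psi>i _ \<psi>])
        show "continuous_on (\<psi> ` M) \<psi>i" using hpsi by (simp add: homeomorphism_def)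
        show "continuous_on (proj_minus i ` M) \<psi>" by (rule contpsi)
        show "\<psi> ` proj_minus i ` M \<subseteq> \<psi> ` M" using psiproj by auto
      qed
      show "(\<lambda>z. \<psi>i (\<psi> z)) ` proj_minus i ` M \<subseteq> M"
        using hp1 psiproj by auto
      show "\<And>x. x \<in> M \<Longrightarrow> \<psi>i (\<psi> (proj_minus i x)) = x"
        using hp1 psiproj by simp
      show "\<And>y. y \<in> proj_minus i ` M \<Longrightarrow> proj_minus i (\<psi>i (\<psi> y)) = y"
        using hp1 psiproj by auto
    qed
    then show ?thesis unfolding topological_embedding_def M_def S_def P_def d_def by blast
  qed
qed

end
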